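(* Suppose the setting below holds with step sizes $\gamma_k = A/k^{\alpha}$ for all $k\ge 1$, where $\alpha\in(0,1]$ and $A>0$ with $\gamma_k\in(0,1]$ for all $k$. Then for every agent $i\in[m]$, $\|x_i^k-\bar x^k\| = \mathcal{O}(1/k^{\alpha})$ as $k\to\infty$.
   Context: Setting. Problem: minimize $F(x)=\frac1m\sum_{i=1}^m f_i(x)$ over $x\in\Omega\subset\mathbb{R}^d$, where $f_i(x)=\frac1{n_i}\sum_{j=1}^{n_i} f_{i,j}(x)$; agent $i$ only knows $f_i$. Assumption 1: $\Omega$ is nonempty, convex and compact with diameter $\bar\rho=\max_{x,\hat x\in\Omega}\|x-\hat x\|$. Standing regularity: each $f_{i,j}$ is differentiable and $L$-smooth (gradient $L$-Lipschitz) on a neighborhood of $\Omega$, each $f_i$ is $G$-Lipschitz on $\Omega$, and $\|\nabla f_i(x)\|\le C$ for all $x\in\Omega$. Assumption 2: the $m$ agents communicate over a connected undirected graph; $W\in\mathbb{R}^{m\times m}$ is symmetric, has nonnegative entries, $W_{ij}=0$ unless $i=j$ or $\{i,j\}$ is an edge, and is doubly stochastic ($W\mathbf 1=W^\top\mathbf 1=\mathbf 1$); moreover $\lambda_2(W)$, the largest modulus of the eigenvalues of $W$ other than the simple eigenvalue $1$ (equivalently $\|W-\frac1m\mathbf 1\mathbf 1^\top\|_2$), satisfies $|\lambda_2(W)|<1$. Algorithm DstoFW with step sizes $\gamma_k\in(0,1]$, epoch length $q\in\mathbb{Z}^+$ and sample sizes $|S^k|$: initialize $x_i^1\in\Omega$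 and $d_i^1=v_i^1=g_i^1=\nabla f_i(x_i^1)$. For $k=1,2,\dots$ each agent $i$ computes: $\overline{x_i^k}=\sum_{j=1}^m W_{ij}x_j^k$; $u_i^k\in\arg\min_{u\in\Omega}\langle u,d_i^k\rangle$; $x_i^{k+1}=(1-\gamma_k)\overline{x_i^k}+\gamma_k u_i^k$; if $(k+1)\bmod q=0$ then $v_i^{k+1}=\frac1{n_i}\sum_{j=1}^{n_i}\nabla f_{i,j}(x_i^{k+1})$, otherwise a sample set $S^k$ of indices from $[n_i]$ is drawn uniformly at random (independently of the past) and $v_i^{k+1}=\frac1{|S^k|}\sum_{j\in S^k}[\nabla f_{i,j}(x_i^{k+1})-\nabla f_{i,j}(x_i^k)]+v_i^k$; then $g_i^{k+1}=d_i^k+v_i^{k+1}-v_i^k$ and $d_i^{k+1}=\sum_{j=1}^m W_{ij}g_j^{k+1}$. Notation: $\bar x^k=\frac1m\sum_i x_i^k$. *)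

theory Defs
  imports "HOL-Analysis.Analysis" "HOL-Library.Landau_Symbols"
begin

text \<open>Agents are indexed by a finite type 'm (so m = CARD('m)); the decision
  space is an abstract Euclidean space 'a (R^d).  Local component functions of
  agent i are f i j for j < n i, with gradients gradf i j.\<close>

definition mean_agents :: "('m::finite \<Rightarrow> 'a::real_vector) \<Rightarrow> 'a" where
  "mean_agents z = (1 / real CARD('m)) *\<^sub>R (\<Sum>i\<in>UNIV. z i)"

definition local_fun :: "nat \<Rightarrow> (nat \<Rightarrow> 'a \<Rightarrow> real) \<Rightarrow> 'a \<Rightarrow> real" where
  "local_fun ni fi x = (\<Sum>j<ni. fi j x) / real ni"

definition local_grad :: "nat \<Rightarrow> (nat \<Rightarrow> 'a \<Rightarrow> 'a::real_vector) \<Rightarrow> 'a \<Rightarrow> 'a" where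
  "local_grad ni gi x = (1 / real ni) *\<^sub>R (\<Sum>j<ni. gi j x)"

text \<open>Assumption 2: W is a symmetric, nonnegative, doubly stochastic matrix
  supported on a connected undirected graph E, with
  lambda_2(W) = norm_2 (W - (1/m) 1 1^T) < 1.\<close>
definition mixing_matrix :: "('m::finite \<Rightarrow> 'm \<Rightarrow> bool) \<Rightarrow> ('m \<Rightarrow> 'm \<Rightarrow> real) \<Rightarrow> bool" where
  "mixing_matrix E W \<longleftrightarrow>
     (\<forall>i j. E i j \<longrightarrow> E j i) \<and>
     (\<forall>i j. E\<^sup>*\<^sup>* i j) \<and>
     (\<forall>i j. W i j = W j i) \<and>
     (\<forall>i j. 0 \<le> W i j) \<and>
     (\<forall>i j. W i j \<noteq> 0 \<longrightarrow> i = j \<or> E i j) \<and>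
     (\<forall>i. (\<Sum>j\<in>UNIV. W i j) = 1) \<and>
     (\<forall>j. (\<Sum>i\<in>UNIV. W i j) = 1) \<and>
     onorm (\<lambda>z::real^'m. \<chi> i. \<Sum>j\<in>UNIV. (W i j - 1 / real CARD('m)) * z $ j) < 1"

text \<open>One sample path of DstoFW (iterations indexed k = 1, 2, ...).  The random
  sample sets are represented by an arbitrary realization S k i \<subseteq> [n_i]
  (nonempty); the theorem is claimed for every realization.\<close>
definition dstofw_run ::
  "('m::finite \<Rightarrow> 'm \<Rightarrow> real) \<Rightarrow> 'a::euclidean_space set \<Rightarrow> ('m \<Rightarrow> nat) \<Rightarrow>
   ('m \<Rightarrow> nat \<Rightarrow> 'a \<Rightarrow> 'a) \<Rightarrow> (nat \<Rightarrow> real) \<Rightarrow> nat \<Rightarrow> (nat \<Rightarrow> 'm \<Rightarrow> nat set) \<Rightarrow>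
   (nat \<Rightarrow> 'm \<Rightarrow> 'a) \<Rightarrow> (nat \<Rightarrow> 'm \<Rightarrow> 'a) \<Rightarrow> (nat \<Rightarrow> 'm \<Rightarrow> 'a) \<Rightarrow>
   (nat \<Rightarrow> 'm \<Rightarrow> 'a) \<Rightarrow> (nat \<Rightarrow> 'm \<Rightarrow> 'a) \<Rightarrow> bool" where
  "dstofw_run W \<Omega> n gradf \<gamma> q S x u d v g \<longleftrightarrow>
     (\<forall>i. x 1 i \<in> \<Omega>) \<and>
     (\<forall>i. d 1 i = local_grad (n i) (gradf i) (x 1 i) \<and>
          v 1 i = local_grad (n i) (gradf i) (x 1 i) \<and>
          g 1 i = local_grad (n i) (gradf i) (x 1 i)) \<and>
     (\<forall>k\<ge>1. \<forall>i.
        u k i \<in> \<Omega> \<and> (\<forall>w\<in>\<Omega>. u k i \<bullet> d k i \<le> w \<bullet> d k i) \<and>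
        x (k+1) i = (1 - \<gamma> k) *\<^sub>R (\<Sum>j\<in>UNIV. W i j *\<^sub>R x k j) + \<gamma> k *\<^sub>R u k i \<and>
        (if (k+1) mod q = 0
         then v (k+1) i = local_grad (n i) (gradf i) (x (k+1) i)
         else S k i \<subseteq> {..<n i} \<and> S k i \<noteq> {} \<and>
              v (k+1) i = (1 / real (card (S k i))) *\<^sub>R
                 (\<Sum>j\<in>S k i. gradf i j (x (k+1) i) - gradf i j (x k i)) + v k i) \<and>
        g (k+1) i = d k i + v (k+1) i - v k i \<and>
        d (k+1) i = (\<Sum>j\<in>UNIV. W i j *\<^sub>R g (k+1) j))"

end

theory Submission
  imports Defs
begin


lemma vec_norm_sq: "(norm (y::'a::real_normed_vector^'m::finite))^2 = (\<Sum>i\<in>UNIV. (norm (y$i))^2)"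
  by (simp add: norm_vec_def L2_set_def sum_nonneg)

lemma eucl_norm_sq: "(norm (v::'a::euclidean_space))^2 = (\<Sum>b\<in>Basis. (v\<bullet>b)^2)"
proof -
  have "(norm v)^2 = v \<bullet> v" by (rule power2_norm_eq_inner)
  also have "\<dots> = (\<Sum>b\<in>Basis. (v\<bullet>b) * (v\<bullet>b))" by (rule euclidean_inner)
  finally show ?thesis by (simp add: power2_eq_square)
qed

lemma contr:
  fixes e :: "'a::euclidean_space ^ 'm::finite" and M :: "'m \<Rightarrow> 'm \<Rightarrow> real"
  defines "Mop \<equiv> (\<lambda>z::real^'m. \<chi> i. \<Sum>j\<in>UNIV. M i j * z$j)"
  shows "norm (\<chi> i. \<Sum>j\<in>UNIV. M i j *\<^sub>R e$j) \<le> onorm Mop * norm e"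
proof -
  have lin: "linear Mop" unfolding Mop_def
    by (rule linearI) (auto simp: vec_eq_iff algebra_simps sum.distrib sum_distrib_left)
  then have bl: "bounded_linear Mop" by (simp add: linear_conv_bounded_linear)
  define lam where "lam = onorm Mop"
  have lam0: "0 \<le> lam" unfolding lam_def using onorm_pos_le[OF bl] .
  define z where "z b = (\<chi> j. e$j \<bullet> b)" for b :: 'a
  have Mz: "Mop (z b) $ i = (\<Sum>j\<in>UNIV. M i j *\<^sub>R e$j) \<bullet> b" for b i
    by (simp add: Mop_def z_def inner_sum_left)
  have "(norm (\<chi> i. \<Sum>j\<in>UNIV. M i j *\<^sub>R e$j))^2
      = (\<Sum>i\<in>UNIV. \<Sum>b\<in>Basis. ((\<Sum>j\<in>UNIV. M i j *\<^sub>R e$j) \<bullet> b)^2)"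
    by (simp add: vec_norm_sq eucl_norm_sq)
  also have "\<dots> = (\<Sum>b\<in>Basis. \<Sum>i\<in>UNIV. (Mop (z b) $ i)^2)"
    by (simp add: Mz sum.swap[of _ UNIV Basis])
  also have "\<dots> = (\<Sum>b\<in>Basis. (norm (Mop (z b)))^2)"
    by (simp add: vec_norm_sq)
  also have "\<dots> \<le> (\<Sum>b\<in>Basis. (lam * norm (z b))^2)"
  proof (rule sum_mono)
    fix b :: 'a
    have "norm (Mop (z b)) \<le> lam * norm (z b)" unfolding lam_def by (rule onorm[OF bl])
    then show "(norm (Mop (z b)))^2 \<le> (lam * norm (z b))^2"
      by (intro power_mono) auto
  qed
  also have "\<dots> = lam^2 * (\<Sum>b\<in>Basis. \<Sum>j\<in>UNIV. (e$j \<bullet> b)^2)"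
    by (simp add: power_mult_distrib sum_distrib_left vec_norm_sq z_def)
  also have "\<dots> = lam^2 * (norm e)^2"
    by (simp add: vec_norm_sq eucl_norm_sq sum.swap[of _ UNIV Basis])
  also have "\<dots> = (lam * norm e)^2" by (simp add: power_mult_distrib)
  finally show ?thesis unfolding lam_def[symmetric]
    using lam0 by (meson norm_ge_zero mult_nonneg_nonneg power2_le_imp_le)
qed


lemma mat_bl: "bounded_linear (\<lambda>z::real^'m::finite. \<chi> i. \<Sum>j\<in>UNIV. M i j * z$j)"
proof -
  have "linear (\<lambda>z::real^'m::finite. \<chi> i. \<Sum>j\<in>UNIV. M i j * z$j)"
    by (rule linearI) (auto simp: vec_eq_iff algebra_simps sum.distrib sum_distrib_left)
  then show ?thesis by (simp add: linear_conv_bounded_linear)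
qed


lemma rec_bound:
  fixes a :: "nat \<Rightarrow> real"
  assumes a0: "\<And>k. 0 \<le> a k" and lam: "0 \<le> lam" "lam < 1" and B: "0 \<le> B" and A: "0 < A"
    and al: "0 < \<alpha>" "\<alpha> \<le> 1"
    and rec: "\<And>k. k \<ge> 1 \<Longrightarrow> a (Suc k) \<le> lam * a k + B * (A / real k powr \<alpha>)"
  shows "\<exists>c K. K \<ge> 1 \<and> (\<forall>k\<ge>K. a k * real k powr \<alpha> \<le> c)"
proof -
  obtain K :: nat where K: "real K \<ge> 2 / (1 - lam)" "K \<ge> 1"
    by (metis real_arch_simple le_cases of_nat_1 of_nat_mono order_trans)
  define c where "c = max (a K * real K powr \<alpha>) (2 * A * B / (1 - lam))"
  have "a k * real k powr \<alpha> \<le> c" if "k \<ge> K" for k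
    using that
  proof (induction k rule: dec_induct)
    case base then show ?case by (simp add: c_def)
  next
    case (step k)
    have k1: "k \<ge> 1" using step K by simp
    have kpos: "real k > 0" using k1 by simp
    have pk: "real k powr \<alpha> > 0" using kpos by simp
    have ak: "a k \<le> c / real k powr \<alpha>" using step.IH pk by (simp add: field_simps)
    have c2: "2 * A * B / (1 - lam) \<le> c" by (simp add: c_def)
    have AB: "A * B \<le> c * (1 - lam) / 2" using c2 lam by (simp add: field_simps)
    have "a (Suc k) \<le> lam * a k + B * (A / real k powr \<alpha>)" using rec k1 by blast
    also have "\<dots> \<le> lam * (c / real k powr \<alpha>) + A * B / real k powr \<alpha>"
      using ak lam by (intro add_mono mult_left_mono) (auto simp: mult.commute)
    also have "\<dots> = (lam * c + A * B) / real k powr \<alpha>" by (simp add: add_divide_distrib)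
    also have "\<dots> \<le> (c * (1 + lam) / 2) / real k powr \<alpha>"
      using AB pk by (intro divide_right_mono) (auto simp: field_simps)
    finally have s1: "a (Suc k) \<le> (c * (1 + lam) / 2) / real k powr \<alpha>" .
    have kK: "real k \<ge> 2 / (1 - lam)" using K step by (meson of_nat_le_iff order_trans)
    have q1: "(1 + lam) * (real k + 1) \<le> 2 * real k"
    proof -
      have "2 \<le> real k * (1 - lam)" using kK lam by (simp add: field_simps)
      then show ?thesis using lam by (simp add: algebra_simps)
    qed
    have r: "(real k + 1) / real k \<ge> 1" using kpos by simp
    have pw: "((real k + 1) / real k) powr \<alpha> \<le> (real k + 1) / real k"
      using powr_mono[OF al(2) r] by simp
    have "real (Suc k) powr \<alpha> = real k powr \<alpha> * ((real k + 1) / real k) powr \<alpha>"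
      using kpos pk by (simp add: powr_divide add.commute)
    also have "\<dots> \<le> real k powr \<alpha> * ((real k + 1) / real k)"
      using pw pk by (intro mult_left_mono) auto
    finally have pS: "real (Suc k) powr \<alpha> \<le> real k powr \<alpha> * ((real k + 1) / real k)" .
    have c0: "0 \<le> c" using c2 A B lam by (smt (verit) divide_nonneg_pos mult_nonneg_nonneg)
    have "a (Suc k) * real (Suc k) powr \<alpha>
        \<le> (c * (1 + lam) / 2) / real k powr \<alpha> * (real k powr \<alpha> * ((real k + 1) / real k))"
      using s1 pS a0[of "Suc k"] by (meson mult_mono powr_ge_zero order_trans)
    also have "\<dots> = c * ((1 + lam) * (real k + 1)) / (2 * real k)"
      using pk kpos by (simp add: field_simps)
    also have "\<dots> \<le> c * (2 * real k) / (2 * real k)"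
      using q1 c0 kpos by (intro divide_right_mono mult_left_mono) auto
    also have "\<dots> = c" using kpos by simp
    finally show ?case .
  qed
  then show ?thesis using K by blast
qed



lemma lin_comb:
  fixes S X U V :: "'a::real_vector"
  shows "(1 - g) *\<^sub>R S + g *\<^sub>R U - ((1 - g) *\<^sub>R X + g *\<^sub>R V)
       = (1 - g) *\<^sub>R (S - X) + g *\<^sub>R (U - V)"
  by (simp add: algebra_simps)

lemma mean_step:
  fixes W :: "'m::finite \<Rightarrow> 'm \<Rightarrow> real" and xx uu :: "'m \<Rightarrow> 'a::real_vector"
  assumes col: "\<And>j. (\<Sum>i\<in>UNIV. W i j) = 1"
  shows "mean_agents (\<lambda>i. (1 - t) *\<^sub>R (\<Sum>j\<in>UNIV. W i j *\<^sub>R xx j) + t *\<^sub>R uu i)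
       = (1 - t) *\<^sub>R mean_agents xx + t *\<^sub>R mean_agents uu"
proof -
  have "(\<Sum>i\<in>UNIV. \<Sum>j\<in>UNIV. W i j *\<^sub>R xx j) = (\<Sum>j\<in>UNIV. (\<Sum>i\<in>UNIV. W i j) *\<^sub>R xx j)"
    by (subst sum.swap) (simp only: scaleR_sum_left)
  also have "\<dots> = (\<Sum>j\<in>UNIV. xx j)" by (simp add: col)
  finally have h: "(\<Sum>i\<in>UNIV. \<Sum>j\<in>UNIV. W i j *\<^sub>R xx j) = (\<Sum>j\<in>UNIV. xx j)" .
  have "(\<Sum>i\<in>UNIV. (1 - t) *\<^sub>R (\<Sum>j\<in>UNIV. W i j *\<^sub>R xx j) + t *\<^sub>R uu i)
      = (1 - t) *\<^sub>R (\<Sum>i\<in>UNIV. \<Sum>j\<in>UNIV. W i j *\<^sub>R xx j) + t *\<^sub>R (\<Sum>i\<in>UNIV. uu i)"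
    by (simp only: sum.distrib scaleR_sum_right)
  also have "\<dots> = (1 - t) *\<^sub>R (\<Sum>j\<in>UNIV. xx j) + t *\<^sub>R (\<Sum>i\<in>UNIV. uu i)"
    by (simp only: h)
  finally have s: "(\<Sum>i\<in>UNIV. (1 - t) *\<^sub>R (\<Sum>j\<in>UNIV. W i j *\<^sub>R xx j) + t *\<^sub>R uu i)
      = (1 - t) *\<^sub>R (\<Sum>j\<in>UNIV. xx j) + t *\<^sub>R (\<Sum>i\<in>UNIV. uu i)" .
  show ?thesis unfolding mean_agents_def s
    by (simp only: scaleR_add_right scaleR_scaleR mult.commute)
qed

lemma dev:
  fixes W :: "'m::finite \<Rightarrow> 'm \<Rightarrow> real" and xx :: "'m \<Rightarrow> 'a::real_vector"
  assumes row: "(\<Sum>j\<in>UNIV. W i j) = 1"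
  shows "(\<Sum>j\<in>UNIV. (W i j - 1 / real CARD('m)) *\<^sub>R (xx j - mean_agents xx))
        = (\<Sum>j\<in>UNIV. W i j *\<^sub>R xx j) - mean_agents xx"
proof -
  have z: "(\<Sum>j\<in>UNIV. (W i j - 1 / real CARD('m))) = 0"
    using row by (simp add: sum_subtractf)
  have "(\<Sum>j\<in>UNIV. (W i j - 1 / real CARD('m)) *\<^sub>R (xx j - mean_agents xx))
      = (\<Sum>j\<in>UNIV. (W i j - 1 / real CARD('m)) *\<^sub>R xx j)
        - (\<Sum>j\<in>UNIV. (W i j - 1 / real CARD('m))) *\<^sub>R mean_agents xx"
    by (simp add: scaleR_diff_right sum_subtractf flip: scaleR_sum_left)
  also have "\<dots> = (\<Sum>j\<in>UNIV. W i j *\<^sub>R xx j) - mean_agents xx"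
    unfolding z by (simp add: scaleR_diff_left sum_subtractf mean_agents_def scaleR_sum_right)
  finally show ?thesis .
qed

lemma mean_bound:
  fixes uu :: "'m::finite \<Rightarrow> 'a::real_normed_vector"
  assumes "\<And>i. norm (uu i) \<le> R"
  shows "norm (mean_agents uu) \<le> R"
proof -
  have "norm (\<Sum>i\<in>UNIV. uu i) \<le> (\<Sum>i\<in>UNIV. norm (uu i))" by (rule norm_sum)
  also have "\<dots> \<le> (\<Sum>i\<in>(UNIV::'m set). R)" using assms by (intro sum_mono) auto
  finally have "norm (\<Sum>i\<in>UNIV. uu i) \<le> (\<Sum>i\<in>(UNIV::'m set). R)" .
  then have "norm (\<Sum>i\<in>UNIV. uu i) \<le> real CARD('m) * R" by simp
  then show ?thesis unfolding mean_agents_def by (simp add: field_simps)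
qed

lemma vec_l1:
  fixes y :: "'a::real_normed_vector ^ 'm::finite"
  shows "norm y \<le> (\<Sum>i\<in>UNIV. norm (y$i))"
  unfolding norm_vec_def by (rule L2_set_le_sum) simp



theorem theorem1:
  fixes \<Omega> :: "'a::euclidean_space set"
    and E :: "'m::finite \<Rightarrow> 'm \<Rightarrow> bool" and W :: "'m \<Rightarrow> 'm \<Rightarrow> real"
    and n :: "'m \<Rightarrow> nat"
    and f :: "'m \<Rightarrow> nat \<Rightarrow> 'a \<Rightarrow> real" and gradf :: "'m \<Rightarrow> nat \<Rightarrow> 'a \<Rightarrow> 'a"
    and U :: "'a set" and L G C A \<alpha> :: real and q :: nat
    and \<gamma> :: "nat \<Rightarrow> real" and S :: "nat \<Rightarrow> 'm \<Rightarrow> nat set"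
    and x u d v g :: "nat \<Rightarrow> 'm \<Rightarrow> 'a"
  assumes Omega: "\<Omega> \<noteq> {}" "convex \<Omega>" "compact \<Omega>"
    and n_pos: "\<And>i. n i \<ge> 1"
    and U: "open U" "\<Omega> \<subseteq> U"
    and diff: "\<And>i j x. j < n i \<Longrightarrow> x \<in> U \<Longrightarrow>
                 (f i j has_derivative (\<lambda>h. gradf i j x \<bullet> h)) (at x)"
    and smooth: "\<And>i j. j < n i \<Longrightarrow> L-lipschitz_on U (gradf i j)"
    and lip: "\<And>i. G-lipschitz_on \<Omega> (local_fun (n i) (f i))"
    and bdd: "\<And>i x. x \<in> \<Omega> \<Longrightarrow> norm (local_grad (n i) (gradf i) x) \<le> C"
    and W: "mixing_matrix E W"
    and q: "q > 0"
    and alpha: "0 < \<alpha>" "\<alpha> \<le> 1" and A: "A > 0"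
    and step: "\<And>k. k \<ge> 1 \<Longrightarrow> \<gamma> k = A / real k powr \<alpha>"
    and step_range: "\<And>k. k \<ge> 1 \<Longrightarrow> 0 < \<gamma> k \<and> \<gamma> k \<le> 1"
    and run: "dstofw_run W \<Omega> n gradf \<gamma> q S x u d v g"
  shows "\<forall>i. (\<lambda>k. norm (x k i - mean_agents (x k))) \<in> O(\<lambda>k. 1 / real k powr \<alpha>)"
  
proof -
  let ?m = "real CARD('m)"
  define Mm where "Mm i j = W i j - 1 / ?m" for i j
  define Mop where "Mop = (\<lambda>z::real^'m. \<chi> i. \<Sum>j\<in>UNIV. Mm i j * z$j)"
  define lam where "lam = onorm Mop"
  have Wf: "\<And>i. (\<Sum>j\<in>UNIV. W i j) = 1" "\<And>j. (\<Sum>i\<in>UNIV. W i j) = 1" "lam < 1"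
    using W unfolding mixing_matrix_def lam_def Mop_def Mm_def by blast+
  have lam0: "0 \<le> lam" unfolding lam_def Mop_def by (rule onorm_pos_le[OF mat_bl])
  obtain R where R: "\<And>y. y \<in> \<Omega> \<Longrightarrow> norm y \<le> R"
    using compact_imp_bounded[OF Omega(3)] unfolding bounded_iff by blast
  have R0: "0 \<le> R" using Omega(1) R by (meson ex_in_conv norm_ge_zero order_trans)
  define B where "B = ?m * (2 * R)"
  have B0: "0 \<le> B" unfolding B_def using R0 by simp
  define E where "E k = (\<chi> i. x k i - mean_agents (x k))" for k
  define a where "a k = norm (E k)" for k
  have rn: "\<And>k i. k \<ge> 1 \<Longrightarrow> u k i \<in> \<Omega> \<and>
        x (k+1) i = (1 - \<gamma> k) *\<^sub>R (\<Sum>j\<in>UNIV. W i j *\<^sub>R x k j) + \<gamma> k *\<^sub>R u k i"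
    using run unfolding dstofw_run_def by blast
  have rec: "a (Suc k) \<le> lam * a k + B * (A / real k powr \<alpha>)" if k1: "k \<ge> 1" for k
  proof -
    have xk1: "x (Suc k) = (\<lambda>i. (1 - \<gamma> k) *\<^sub>R (\<Sum>j\<in>UNIV. W i j *\<^sub>R x k j) + \<gamma> k *\<^sub>R u k i)"
      using rn[OF k1] by auto
    have mn: "mean_agents (x (Suc k)) = (1 - \<gamma> k) *\<^sub>R mean_agents (x k) + \<gamma> k *\<^sub>R mean_agents (u k)"
      unfolding xk1 by (rule mean_step[OF Wf(2)])
    have EE: "E (Suc k) = (1 - \<gamma> k) *\<^sub>R (\<chi> i. \<Sum>j\<in>UNIV. Mm i j *\<^sub>R (E k)$j)
                  + \<gamma> k *\<^sub>R (\<chi> i. u k i - mean_agents (u k))"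
    proof -
      have "x (Suc k) i - mean_agents (x (Suc k)) =
          (1 - \<gamma> k) *\<^sub>R (\<Sum>j\<in>UNIV. Mm i j *\<^sub>R (x k j - mean_agents (x k)))
            + \<gamma> k *\<^sub>R (u k i - mean_agents (u k))" for i
      proof -
        have d: "(\<Sum>j\<in>UNIV. Mm i j *\<^sub>R (x k j - mean_agents (x k)))
               = (\<Sum>j\<in>UNIV. W i j *\<^sub>R x k j) - mean_agents (x k)"
          unfolding Mm_def by (rule dev[OF Wf(1)])
        have xi: "x (Suc k) i = (1 - \<gamma> k) *\<^sub>R (\<Sum>j\<in>UNIV. W i j *\<^sub>R x k j) + \<gamma> k *\<^sub>R u k i"
          using fun_cong[OF xk1, of i] by simp
        have "x (Suc k) i - mean_agents (x (Suc k)) =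
            (1 - \<gamma> k) *\<^sub>R (\<Sum>j\<in>UNIV. W i j *\<^sub>R x k j) + \<gamma> k *\<^sub>R u k i
            - ((1 - \<gamma> k) *\<^sub>R mean_agents (x k) + \<gamma> k *\<^sub>R mean_agents (u k))"
          by (subst xi, subst mn, rule refl)
        also have "\<dots> = (1 - \<gamma> k) *\<^sub>R ((\<Sum>j\<in>UNIV. W i j *\<^sub>R x k j) - mean_agents (x k))
            + \<gamma> k *\<^sub>R (u k i - mean_agents (u k))"
          by (rule lin_comb)
        also have "\<dots> = (1 - \<gamma> k) *\<^sub>R (\<Sum>j\<in>UNIV. Mm i j *\<^sub>R (x k j - mean_agents (x k)))
            + \<gamma> k *\<^sub>R (u k i - mean_agents (u k))"
          by (simp only: d)
        finally show ?thesis .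
      qed
      then show ?thesis unfolding E_def vec_eq_iff
        by (simp only: vec_lambda_beta vector_add_component vector_scaleR_component simp_thms)
    qed
    have g: "0 < \<gamma> k" "\<gamma> k \<le> 1" using step_range k1 by auto
    have t1: "norm (\<chi> i. \<Sum>j\<in>UNIV. Mm i j *\<^sub>R (E k)$j) \<le> lam * a k"
      unfolding lam_def a_def Mop_def by (rule contr)
    have un: "norm (u k i) \<le> R" for i using rn[OF k1] R by blast
    have ub: "norm (mean_agents (u k)) \<le> R" by (rule mean_bound) (rule un)
    have t2: "norm (\<chi> i. u k i - mean_agents (u k)) \<le> B"
    proof -
      have "norm (\<chi> i. u k i - mean_agents (u k)) \<le> (\<Sum>i\<in>UNIV. norm ((\<chi> i. u k i - mean_agents (u k)) $ i))"
        by (rule vec_l1)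
      also have "\<dots> \<le> (\<Sum>i\<in>(UNIV::'m set). 2 * R)"
      proof (intro sum_mono)
        fix i :: 'm
        have "norm (u k i - mean_agents (u k)) \<le> norm (u k i) + norm (mean_agents (u k))"
          by (rule norm_triangle_ineq4)
        then show "norm ((\<chi> i. u k i - mean_agents (u k)) $ i) \<le> 2 * R" using un[of i] ub by simp
      qed
      also have "\<dots> = B" unfolding B_def by simp
      finally show ?thesis .
    qed
    have "a (Suc k) \<le> norm ((1 - \<gamma> k) *\<^sub>R (\<chi> i. \<Sum>j\<in>UNIV. Mm i j *\<^sub>R (E k)$j))
                  + norm (\<gamma> k *\<^sub>R (\<chi> i. u k i - mean_agents (u k)))"
      unfolding a_def EE by (rule norm_triangle_ineq)
    also have "\<dots> = (1 - \<gamma> k) * norm (\<chi> i. \<Sum>j\<in>UNIV. Mm i j *\<^sub>R (E k)$j)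
                  + \<gamma> k * norm (\<chi> i. u k i - mean_agents (u k))"
      using g by simp
    also have "\<dots> \<le> 1 * (lam * a k) + \<gamma> k * B"
      using g t1 t2 lam0 by (intro add_mono mult_mono) (auto simp: a_def)
    also have "\<dots> = lam * a k + B * (A / real k powr \<alpha>)"
      using step[OF k1] by simp
    finally show ?thesis .
  qed
  obtain c K where K: "K \<ge> 1" "\<And>k. k \<ge> K \<Longrightarrow> a k * real k powr \<alpha> \<le> c"
    using rec_bound[of a lam B A \<alpha>, OF _ lam0 Wf(3) B0 A alpha rec] unfolding a_def by auto
  show ?thesis
  proof
    fix i
    show "(\<lambda>k. norm (x k i - mean_agents (x k))) \<in> O(\<lambda>k. 1 / real k powr \<alpha>)"
    proof (rule bigoI[where c = c])
      show "\<forall>\<^sub>F k in at_top. norm (norm (x k i - mean_agents (x k))) \<le> c * norm (1 / real k powr \<alpha>)"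
        unfolding eventually_at_top_linorder
      proof (intro exI allI impI)
        fix k assume kK: "k \<ge> K"
        have kp: "real k powr \<alpha> > 0" using kK K by simp
        have "norm (x k i - mean_agents (x k)) = norm (E k $ i)" by (simp add: E_def)
        also have "\<dots> \<le> a k" unfolding a_def by (rule Finite_Cartesian_Product.norm_nth_le)
        also have "\<dots> \<le> c / real k powr \<alpha>" using K(2)[OF kK] kp by (simp add: pos_le_divide_eq)
        also have "\<dots> = c * norm (1 / real k powr \<alpha>)" using kp by simp
        finally show "norm (norm (x k i - mean_agents (x k))) \<le> c * norm (1 / real k powr \<alpha>)"
          by simp
      qed
    qed
  qed
qed

end
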